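(* For every $n\ge1$, the map $\psi$ defined below is a well-defined bijection from $\mathcal{S}_n$ to $\mathfrak{R}_n$.
   Context: A snake of length $n$ is a word $p_1\cdots p_n$ with $p_i\in\{\pm1,\dots,\pm n\}$ such that: - $|p_1|\cdots|p_n|$ is a permutation of $[n]$; - $p_1>0$; - $p_1>p_2<p_3>p_4<\cdots$. Let $\mathcal{S}_n$ be the set of snakes of length $n$. A permutation $\pi\in\mathfrak{S}_{2n}$ is alternating if $\pi_1>\pi_2<\pi_3>\cdots$. It is rc-invariant if $\pi_{2n+1-i}=2n+1-\pi_i$ for all $i$. Let $\mathfrak{R}_n$ be the set of rc-invariant alternating permutations of $[2n]$. For $p\in\mathcal{S}_n$, define $\tilde p_i=n+p_i$ if $p_i>0$ and $\tilde p_i=n+1+p_i$ if $p_i<0$. Then $\psi(p)$ is the unique rc-invariant permutation of $[2n]$ such that: - if $n$ is odd, its first $n$ entries are $\tilde p_n\tilde p_{n-1}\cdots\tilde p_1$; - if $n$ is even, its last $n$ entries are $\tilde p_1\cdots\tilde p_n$. Example: $p=2\,1\,5\,\bar4\,\bar3$ (where $\bar k=-k$) gives $\psi(p)=3\,2\,10\,6\,7\,4\,5\,1\,9\,8$. *)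

theory Defs
  imports Main
begin

text \<open>Words are lists, indexed from 0: the paper's p_i is p ! (i-1).\<close>

definition down_up :: "int list \<Rightarrow> bool" where
  "down_up w \<longleftrightarrow> (\<forall>i. Suc i < length w \<longrightarrow>
      (if even i then w ! i > w ! Suc i else w ! i < w ! Suc i))"

definition snakes :: "nat \<Rightarrow> int list set" where
  "snakes n = {p. length p = n
      \<and> distinct (map abs p) \<and> set (map abs p) = {1..int n}
      \<and> p ! 0 > 0
      \<and> down_up p}"

definition is_perm_of :: "int list \<Rightarrow> int \<Rightarrow> bool" where
  "is_perm_of w m \<longleftrightarrow> length w = nat m \<and> distinct w \<and> set w = {1..m}"

definition rc_invariant :: "int list \<Rightarrow> bool" where
  "rc_invariant w \<longleftrightarrow> (\<forall>i < length w.
      w ! (length w - 1 - i) = int (length w) + 1 - w ! i)"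

definition rc_alt :: "nat \<Rightarrow> int list set" where
  "rc_alt n = {w. is_perm_of w (2 * int n) \<and> down_up w \<and> rc_invariant w}"

definition tilde :: "nat \<Rightarrow> int \<Rightarrow> int" where
  "tilde n x = (if x > 0 then int n + x else int n + 1 + x)"

text \<open>psi: the rc-invariant word of length 2n whose first n entries are
  tilde p_n ... tilde p_1 (n odd), resp. whose last n entries are
  tilde p_1 ... tilde p_n (n even); the other half is forced by rc-invariance.\<close>

definition psi :: "nat \<Rightarrow> int list \<Rightarrow> int list" where
  "psi n p = (let t = map (tilde n) p; c = (\<lambda>x. 2 * int n + 1 - x) in
     if odd n then rev t @ map c t
     else rev (map c t) @ t)"

end

theory Submission
  imports Defs
begin

definition alt :: "bool \<Rightarrow> int list \<Rightarrow> bool" where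
 "alt b w \<longleftrightarrow> (\<forall>i. Suc i < length w \<longrightarrow> (if even i = b then w!i > w!Suc i else w!i < w!Suc i))"

lemma down_up_alt: "down_up w = alt True w" by (simp add: down_up_def alt_def)

lemma alt_map_mono:
  assumes "\<And>x y. x \<in> set xs \<Longrightarrow> y \<in> set xs \<Longrightarrow> x < y \<Longrightarrow> f x < f y"
  shows "alt b (map f xs) = alt b xs"
proof -
  have k: "x \<in> set xs \<Longrightarrow> y \<in> set xs \<Longrightarrow> f x < f y \<longleftrightarrow> x < y" for x y
    using assms[of x y] assms[of y x] by (cases x y rule: linorder_cases) auto
  show ?thesis unfolding alt_def by (auto simp: k nth_mem)
qed

lemma alt_map_anti:
  assumes "\<And>x y. x \<in> set xs \<Longrightarrow> y \<in> set xs \<Longrightarrow> x < y \<Longrightarrow> f y < f x"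
  shows "alt b (map f xs) = alt (\<not> b) xs"
proof -
  have k: "x \<in> set xs \<Longrightarrow> y \<in> set xs \<Longrightarrow> f x < f y \<longleftrightarrow> y < x" for x y
    using assms[of x y] assms[of y x] by (cases x y rule: linorder_cases) auto
  show ?thesis unfolding alt_def by (auto simp: k nth_mem)
qed

lemma alt_take: "alt b w \<Longrightarrow> alt b (take k w)"
  unfolding alt_def by auto

lemma alt_drop: "alt b w \<Longrightarrow> alt (if even k then b else \<not> b) (drop k w)"
  unfolding alt_def
proof (intro allI impI)
  fix i assume a: "\<forall>i. Suc i < length w \<longrightarrow> (if even i = b then w ! i > w ! Suc i else w ! i < w ! Suc i)"
    and i: "Suc i < length (drop k w)"
  have "Suc (k+i) < length w" using i by auto
  with a have "(if even (k+i) = b then w ! (k+i) > w ! Suc (k+i) else w ! (k+i) < w ! Suc (k+i))" by blast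
  then show "if even i = (if even k then b else \<not> b) then drop k w ! i > drop k w ! Suc i else drop k w ! i < drop k w ! Suc i"
    using i by (auto simp: nth_drop split: if_splits)
qed

lemma alt_rev_aux: "alt b xs \<Longrightarrow> alt (if even (length xs) then \<not> b else b) (rev xs)"
  unfolding alt_def
proof (intro allI impI)
  fix i assume a: "\<forall>i. Suc i < length xs \<longrightarrow> (if even i = b then xs ! i > xs ! Suc i else xs ! i < xs ! Suc i)"
    and i: "Suc i < length (rev xs)"
  define j where "j = length xs - 2 - i"
  have j: "Suc j < length xs" "length xs - Suc i = Suc j" "length xs - Suc (Suc i) = j" using i by (auto simp: j_def)
  have par: "even j = (even (length xs) = even i)"
  proof -
    have "length xs = j + 2 + i" using i by (auto simp: j_def)
    then show ?thesis by auto
  qed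
  from a j have "(if even j = b then xs ! j > xs ! Suc j else xs ! j < xs ! Suc j)" by blast
  then show "if even i = (if even (length xs) then \<not> b else b) then rev xs ! i > rev xs ! Suc i else rev xs ! i < rev xs ! Suc i"
    using i j par by (auto simp: rev_nth split: if_splits)
qed

lemma alt_rev: "alt b (rev xs) = alt (if even (length xs) then \<not> b else b) xs"
  using alt_rev_aux[of b "rev xs"] alt_rev_aux[of "\<not>b" xs] alt_rev_aux[of b xs]
  by (cases "even (length xs)") auto

lemma alt_append:
  assumes "alt b xs" "alt (if even (length xs) then b else \<not> b) ys"
    "xs \<noteq> [] \<Longrightarrow> ys \<noteq> [] \<Longrightarrow> (if even (length xs - 1) = b then last xs > hd ys else last xs < hd ys)"
  shows "alt b (xs @ ys)"
  unfolding alt_def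
proof (intro allI impI)
  fix i assume i: "Suc i < length (xs @ ys)"
  show "if even i = b then (xs @ ys) ! i > (xs @ ys) ! Suc i else (xs @ ys) ! i < (xs @ ys) ! Suc i"
  proof (cases "Suc i < length xs")
    case True then show ?thesis using assms(1) by (auto simp: alt_def nth_append)
  next
    case F: False
    show ?thesis
    proof (cases "Suc i = length xs")
      case True
      then have ne: "xs \<noteq> []" "ys \<noteq> []" using i by auto
      have "last xs = xs ! i" using True ne by (simp add: last_conv_nth True[symmetric])
      moreover have "hd ys = ys ! 0" using ne by (simp add: hd_conv_nth)
      moreover have "length xs - 1 = i" using True by simp
      ultimately have "if even i = b then xs ! i > ys ! 0 else xs ! i < ys ! 0"
        using assms(3)[OF ne] by metis
      then show ?thesis using True by (simp add: nth_append True[symmetric])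
    next
      case False
      define k where "k = i - length xs"
      have k: "i = length xs + k" "Suc k < length ys" using F False i by (auto simp: k_def)
      have "(if even k = (if even (length xs) then b else \<not> b) then ys ! k > ys ! Suc k else ys ! k < ys ! Suc k)"
        using assms(2) k(2) unfolding alt_def by blast
      then show ?thesis using k by (auto simp: nth_append split: if_splits)
    qed
  qed
qed

definition untilde :: "nat \<Rightarrow> int \<Rightarrow> int" where
  "untilde n y = (if y > int n then y - int n else y - int n - 1)"

definition phi :: "nat \<Rightarrow> int list \<Rightarrow> int list" where
  "phi n w = map (untilde n) (if odd n then rev (take n w) else drop n w)"

lemma tilde_untilde: "tilde n (untilde n y) = y"
  by (simp add: tilde_def untilde_def)

lemma untilde_tilde: "x \<noteq> 0 \<Longrightarrow> untilde n (tilde n x) = x"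
  by (simp add: tilde_def untilde_def)

lemma untilde_mono: "y < y' \<Longrightarrow> untilde n y < untilde n y'"
  by (simp add: untilde_def)

lemma tilde_mono: "x \<noteq> 0 \<Longrightarrow> y \<noteq> 0 \<Longrightarrow> x < y \<Longrightarrow> tilde n x < tilde n y"
  by (simp add: tilde_def)

lemma rc_lemma1: "rc_invariant (rev xs @ map (\<lambda>x. 2 * int (length xs) + 1 - x) xs)"
  unfolding rc_invariant_def
proof (intro allI impI)
  fix i assume i: "i < length (rev xs @ map (\<lambda>x. 2 * int (length xs) + 1 - x) xs)"
  let ?m = "length xs"
  show "(rev xs @ map (\<lambda>x. 2 * int ?m + 1 - x) xs) ! (length (rev xs @ map (\<lambda>x. 2 * int ?m + 1 - x) xs) - 1 - i) =
    int (length (rev xs @ map (\<lambda>x. 2 * int ?m + 1 - x) xs)) + 1 - (rev xs @ map (\<lambda>x. 2 * int ?m + 1 - x) xs) ! i"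
  proof (cases "i < ?m")
    case True
    have e: "2 * ?m - 1 - i - ?m = ?m - 1 - i" "\<not> 2 * ?m - 1 - i < ?m" using True by auto
    show ?thesis using True e by (simp add: nth_append rev_nth) linarith
  next
    case False
    have e: "2 * ?m - 1 - i < ?m" "?m - Suc (2 * ?m - 1 - i) = i - ?m" using False i by auto
    show ?thesis using False e i by (simp add: nth_append rev_nth) linarith
  qed
qed

lemma rc_lemma2: "rc_invariant (rev (map (\<lambda>x. 2 * int (length xs) + 1 - x) xs) @ xs)"
  unfolding rc_invariant_def
proof (intro allI impI)
  fix i assume i: "i < length (rev (map (\<lambda>x. 2 * int (length xs) + 1 - x) xs) @ xs)"
  let ?m = "length xs"
  show "(rev (map (\<lambda>x. 2 * int ?m + 1 - x) xs) @ xs) ! (length (rev (map (\<lambda>x. 2 * int ?m + 1 - x) xs) @ xs) - 1 - i) =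
    int (length (rev (map (\<lambda>x. 2 * int ?m + 1 - x) xs) @ xs)) + 1 - (rev (map (\<lambda>x. 2 * int ?m + 1 - x) xs) @ xs) ! i"
  proof (cases "i < ?m")
    case True
    have e: "2 * ?m - 1 - i - ?m = ?m - 1 - i" "\<not> 2 * ?m - 1 - i < ?m" using True by auto
    show ?thesis using True e by (simp add: nth_append rev_nth) linarith
  next
    case False
    have e: "2 * ?m - 1 - i < ?m" "?m - Suc (2 * ?m - 1 - i) = i - ?m" using False i by auto
    show ?thesis using False e i by (simp add: nth_append rev_nth) linarith
  qed
qed

lemma rc_halves:
  assumes "rc_invariant w" "length w = 2 * n"
  shows "drop n w = map (\<lambda>x. 2 * int n + 1 - x) (rev (take n w))"
proof (rule nth_equalityI)
  show "length (drop n w) = length (map (\<lambda>x. 2 * int n + 1 - x) (rev (take n w)))" using assms by simp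
next
  fix i assume i: "i < length (drop n w)"
  then have i': "i < n" using assms by simp
  have "w ! (length w - 1 - (n - 1 - i)) = int (length w) + 1 - w ! (n - 1 - i)"
    using assms(1) i' assms(2) unfolding rc_invariant_def
    by (metis (no_types) add_lessD1 diff_less_Suc less_trans_Suc mult_2 Suc_diff_1 not_less0 not_less_eq diff_le_self le_less_trans)
  moreover have "length w - 1 - (n - 1 - i) = n + i" using i' assms(2) by auto
  ultimately have "w ! (n + i) = 2 * int n + 1 - w ! (n - Suc i)" using assms(2) by simp
  then show "drop n w ! i = map (\<lambda>x. 2 * int n + 1 - x) (rev (take n w)) ! i"
    using i' assms(2) by (simp add: rev_nth)
qed

lemma snake_facts:
  assumes "p \<in> snakes n"
  shows "length p = n" "inj_on abs (set p)" "\<And>x. x \<in> set p \<Longrightarrow> x \<noteq> 0 \<and> \<bar>x\<bar> \<le> int n"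
    "p ! 0 > 0" "alt True p"
proof -
  show "length p = n" "p ! 0 > 0" "alt True p" using assms by (auto simp: snakes_def down_up_alt)
  show "inj_on abs (set p)" using assms by (auto simp: snakes_def distinct_map)
  fix x assume x: "x \<in> set p"
  then have "abs x \<in> set (map abs p)" by simp
  then show "x \<noteq> 0 \<and> \<bar>x\<bar> \<le> int n" using assms by (auto simp: snakes_def)
qed

lemma psi_in:
  assumes n: "n \<ge> 1" and p: "p \<in> snakes n"
  shows "psi n p \<in> rc_alt n"
proof -
  define t where "t = map (tilde n) p"
  define c where "c = (\<lambda>x::int. 2 * int n + 1 - x)"
  note sf = snake_facts[OF p]
  have lt: "length t = n" using sf by (simp add: t_def)
  have tr: "set t \<subseteq> {1..2 * int n}"
  proof
    fix y assume "y \<in> set t"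
    then obtain x where x: "x \<in> set p" "y = tilde n x" by (auto simp: t_def)
    with sf(3)[OF x(1)] show "y \<in> {1..2 * int n}" by (auto simp: tilde_def)
  qed
  have dt: "distinct t" unfolding t_def distinct_map
  proof
    show "distinct p" using p by (auto simp: snakes_def distinct_map)
    show "inj_on (tilde n) (set p)"
      by (rule inj_onI) (metis sf(3) untilde_tilde)
  qed
  have disj: "set t \<inter> c ` set t = {}"
  proof (rule ccontr)
    assume "set t \<inter> c ` set t \<noteq> {}"
    then obtain x y where xy: "x \<in> set p" "y \<in> set p" "tilde n x = c (tilde n y)"
      by (auto simp: t_def)
    have hx: "x \<noteq> 0" "y \<noteq> 0" using sf(3) xy by auto
    have "tilde n x + tilde n y = 2 * int n + 1" using xy(3) by (simp add: c_def)
    then have "x + y = 0" "(x > 0) \<noteq> (y > 0)" using hx by (auto simp: tilde_def split: if_splits)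
    then have "abs x = abs y" "x \<noteq> y" by auto
    with sf(2) xy(1,2) show False by (meson inj_onD)
  qed
  have cinj: "inj c" by (rule injI) (simp add: c_def)
  have dc: "distinct (map c t)" using dt cinj by (simp add: distinct_map inj_on_def)
  have cr: "c ` set t \<subseteq> {1..2 * int n}" using tr by (auto simp: c_def)
  have tm: "alt True t" unfolding t_def
    by (subst alt_map_mono) (use sf(3,5) tilde_mono in auto)
  have ct: "alt False (map c t)"
    by (subst alt_map_anti) (auto simp: c_def tm)
  have t0: "t ! 0 > int n" using sf(1,4) n by (simp add: t_def tilde_def)
  have ne: "t \<noteq> []" using lt n by auto
  have hd: "hd t = t ! 0" using ne by (simp add: hd_conv_nth)
  have psi: "psi n p = (if odd n then rev t @ map c t else rev (map c t) @ t)"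
    by (simp add: psi_def t_def c_def Let_def)
  let ?w = "psi n p"
  have len: "length ?w = 2 * n" using psi lt by simp
  have dw: "distinct ?w" using psi dt dc disj by auto
  have sw: "set ?w \<subseteq> {1..2 * int n}" using psi tr cr by auto
  have sw2: "set ?w = {1..2 * int n}"
    by (rule card_subset_eq) (use sw distinct_card[OF dw] len in auto)
  have rc: "rc_invariant ?w" using psi rc_lemma1[of t] rc_lemma2[of t] lt by (simp add: c_def)
  have du: "alt True ?w"
  proof (cases "odd n")
    case True
    have "alt True (rev t @ map c t)"
    proof (rule alt_append)
      show "alt True (rev t)" using True lt tm by (simp add: alt_rev)
      show "alt (if even (length (rev t)) then True else \<not> True) (map c t)" using True lt ct by simp
      show "if even (length (rev t) - 1) = True then last (rev t) > hd (map c t) else last (rev t) < hd (map c t)"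
        using True lt ne t0 hd by (simp add: last_rev hd_map c_def)
    qed
    then show ?thesis using psi True by simp
  next
    case False
    have "alt True (rev (map c t) @ t)"
    proof (rule alt_append)
      show "alt True (rev (map c t))" using False lt ct by (simp add: alt_rev)
      show "alt (if even (length (rev (map c t))) then True else \<not> True) t" using False lt tm by simp
      have "odd (n - 1)" using False n by (cases n) auto
      then show "if even (length (rev (map c t)) - 1) = True then last (rev (map c t)) > hd t else last (rev (map c t)) < hd t"
        using lt ne t0 hd by (simp add: last_rev hd_map c_def)
    qed
    then show ?thesis using psi False by simp
  qed
  show ?thesis unfolding rc_alt_def is_perm_of_def
    using len dw sw2 rc du by (simp add: down_up_alt)
qed

lemma phi_in:
  assumes n: "n \<ge> 1" and w: "w \<in> rc_alt n"
  shows "phi n w \<in> snakes n"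
proof -
  define c where "c = (\<lambda>x::int. 2 * int n + 1 - x)"
  have lw: "length w = 2 * n" and dw: "distinct w" and sw: "set w = {1..2 * int n}"
    and aw: "alt True w" and rc: "rc_invariant w"
    using w by (auto simp: rc_alt_def is_perm_of_def down_up_alt)
  have halves: "drop n w = map c (rev (take n w))" using rc_halves[OF rc lw] by (simp add: c_def)
  define h where "h = (if odd n then rev (take n w) else drop n w)"
  have ph: "phi n w = map (untilde n) h" by (simp add: phi_def h_def)
  have lh: "length h = n" using lw by (simp add: h_def)
  have disjAB: "set (take n w) \<inter> set (drop n w) = {}"
    using dw by (metis append_take_drop_id distinct_append)
  have B: "set (drop n w) = c ` set (take n w)" using halves by simp
  have cc: "c (c y) = y" for y by (simp add: c_def)
  have nopair: "y \<in> set h \<Longrightarrow> c y \<notin> set h" for y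
  proof (cases "odd n")
    case True
    assume y: "y \<in> set h"
    then show ?thesis using True disjAB B by (auto simp: h_def)
  next
    case False
    assume y: "y \<in> set h"
    then obtain a where a: "a \<in> set (take n w)" "y = c a" using False B by (auto simp: h_def)
    then show ?thesis using False disjAB cc by (auto simp: h_def)
  qed
  have "set h \<subseteq> set w" by (auto simp: h_def dest: in_set_takeD in_set_dropD)
  then have hr: "set h \<subseteq> {1..2 * int n}" using sw by simp
  have dh: "distinct h" using dw by (simp add: h_def)
  define g where "g = (\<lambda>y. abs (untilde n y))"
  have ginj: "inj_on g (set h)"
  proof (rule inj_onI)
    fix y y' assume yy: "y \<in> set h" "y' \<in> set h" "g y = g y'"
    have r: "1 \<le> y" "y \<le> 2 * int n" "1 \<le> y'" "y' \<le> 2 * int n" using yy hr by auto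
    from yy(3) r have "y = y' \<or> y' = c y" by (auto simp: g_def untilde_def c_def split: if_splits)
    then show "y = y'" using nopair yy by auto
  qed
  have gr: "g ` set h \<subseteq> {1..int n}" using hr by (auto simp: g_def untilde_def)
  have mabs: "map abs (phi n w) = map g h" by (simp add: ph g_def)
  have dg: "distinct (map g h)" using dh ginj by (simp add: distinct_map)
  have sg: "set (map g h) = {1..int n}"
    by (rule card_subset_eq) (use gr distinct_card[OF dg] lh in auto)
  have h0: "h ! 0 > int n"
  proof (cases "odd n")
    case True
    have "even (n - 1)" using True n by (cases n) auto
    moreover have "Suc (n - 1) < length w" using lw n by simp
    ultimately have "w ! (n - 1) > w ! Suc (n - 1)" using aw unfolding alt_def by (metis (full_types))
    then have "w ! (n - 1) > w ! n" using n by simp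
    moreover have "w ! n = c (w ! (n - 1))"
    proof -
      have "w ! n = drop n w ! 0" using lw n by simp
      also have "\<dots> = c (w ! (n - 1))" using halves lw n by (simp add: rev_nth)
      finally show ?thesis .
    qed
    ultimately have "w ! (n - 1) > int n" using n by (simp add: c_def)
    then show ?thesis using True lw n by (simp add: h_def rev_nth)
  next
    case False
    have "odd (n - 1)" using False n by (cases n) auto
    moreover have "Suc (n - 1) < length w" using lw n by simp
    ultimately have "w ! (n - 1) < w ! Suc (n - 1)" using aw unfolding alt_def by (metis (full_types))
    then have "w ! (n - 1) < w ! n" using n by simp
    moreover have "w ! n = c (w ! (n - 1))"
    proof -
      have "w ! n = drop n w ! 0" using lw n by simp
      also have "\<dots> = c (w ! (n - 1))" using halves lw n by (simp add: rev_nth)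
      finally show ?thesis .
    qed
    ultimately have "w ! n > int n" using n by (simp add: c_def)
    then show ?thesis using False lw n by (simp add: h_def)
  qed
  have p0: "phi n w ! 0 > 0" using h0 lh n by (simp add: ph untilde_def)
  have ah: "alt True h"
  proof (cases "odd n")
    case True
    then show ?thesis using alt_take[OF aw, of n] lw by (simp add: h_def alt_rev)
  next
    case False
    then show ?thesis using alt_drop[OF aw, of n] by (simp add: h_def)
  qed
  have ap: "alt True (phi n w)" unfolding ph
    by (subst alt_map_mono) (use ah untilde_mono in auto)
  show ?thesis unfolding snakes_def
    using lh ph dg sg p0 ap unfolding mabs[symmetric] by (simp add: down_up_alt del: map_map)
qed

lemma phi_psi: assumes "p \<in> snakes n" shows "phi n (psi n p) = p"
proof -
  note sf = snake_facts[OF assms]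
  have "map (untilde n) (map (tilde n) p) = p"
    by (simp add: comp_def) (rule map_idI, simp add: untilde_tilde sf(3))
  then show ?thesis using sf(1) by (simp add: phi_def psi_def Let_def)
qed

lemma psi_phi: assumes "w \<in> rc_alt n" shows "psi n (phi n w) = w"
proof -
  define c where "c = (\<lambda>x::int. 2 * int n + 1 - x)"
  have lw: "length w = 2 * n" and rc: "rc_invariant w"
    using assms by (auto simp: rc_alt_def is_perm_of_def)
  have halves: "drop n w = map c (rev (take n w))" using rc_halves[OF rc lw] by (simp add: c_def)
  have tu: "map (tilde n) (map (untilde n) xs) = xs" for xs by (induct xs) (auto simp: tilde_untilde)
  have cc: "map c (map c xs) = xs" for xs by (induct xs) (auto simp: c_def)
  show ?thesis
  proof (cases "odd n")
    case True
    then have "psi n (phi n w) = take n w @ map c (rev (take n w))"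
      by (simp add: psi_def phi_def Let_def tu c_def tilde_untilde comp_def)
    then show ?thesis using halves by (metis append_take_drop_id)
  next
    case False
    then have "psi n (phi n w) = rev (map c (drop n w)) @ drop n w"
      by (simp add: psi_def phi_def Let_def tu c_def tilde_untilde comp_def)
    also have "rev (map c (drop n w)) = take n w" using halves cc by (simp add: rev_map[symmetric])
    finally show ?thesis by simp
  qed
qed

theorem theorem3p2:
  fixes n :: nat
  assumes "n \<ge> 1"
  shows "bij_betw (psi n) (snakes n) (rc_alt n)"
  by (rule bij_betw_byWitness[where f' = "phi n"])
     (use assms phi_psi psi_phi psi_in phi_in in auto)

end
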